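(* Let $\mathcal D[t]\subset\mathcal H\subset\mathcal D^\times[t^\times]$ be a rigged Hilbert space with $\mathcal D[t]$ reflexive, $(X,\mu)$ a $\sigma$-finite measure space, $\omega,\theta:X\to\mathcal D^\times$ weakly measurable maps and $m:X\to\mathbb C$ measurable such that $D(M_{m,\omega,\theta})=\mathcal D$. (i) If there is $J\in\mathcal L(\mathcal D)$ with $M_{m,\omega,\theta}Jf=f$ for all $f\in\mathcal D$, then the map $\rho:X\to\mathcal D^\times$, $\rho_x=J^\times(\overline{m(x)}\omega_x)$, satisfies $\langle f,g\rangle=\int_X\langle f,\rho_x\rangle\langle\theta_x,g\rangle d\mu$ for all $f,g\in\mathcal D$. (ii) If there is $K\in\mathcal L(\mathcal D^\times)$ with $KM_{m,\omega,\theta}f=f$ for all $f\in\mathcal D$, then the map $\tau:X\to\mathcal D^\times$, $\tau_x=K(m(x)\theta_x)$, satisfies $\langle f,g\rangle=\int_X\langle f,\omega_x\rangle\langle\tau_x,g\rangle d\mu$ for all $f,g\in\mathcal D$.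
   Context: Rigged Hilbert space: $\mathcal D$ dense subspace of Hilbert space $\mathcal H$ with a locally convex topology $t$ finer than the norm topology, $\mathcal D^\times$ its conjugate dual with strong dual topology, $\mathcal H\subset\mathcal D^\times$, the pairing $\langle F,f\rangle$ extends the inner product, and $\langle f,F\rangle:=\overline{\langle F,f\rangle}$. $\omega$ weakly measurable means $x\mapsto\langle f,\omega_x\rangle$ is measurable for each $f\in\mathcal D$. Distribution multiplier $M_{m,\omega,\theta}$: its domain is the set of $f\in\mathcal D$ such that $\int_X m(x)\langle f,\omega_x\rangle\langle\theta_x,g\rangle d\mu$ converges for all $g\in\mathcal D$ and defines a functional of $g$ bounded in the $\mathcal H$-norm; $M_{m,\omega,\theta}f\in\mathcal H$ is the Riesz representative: $\langle M_{m,\omega,\theta}f,g\rangle=\int_X m(x)\langle f,\omega_x\rangle\langle\theta_x,g\rangle d\mu$. $\mathcal L(\mathcal D)$ (resp. $\mathcal L(\mathcal D^\times)$) is the algebra of continuous linear operators on $\mathcal D[t]$ (resp. $\mathcal D^\times[t^\times]$). For $J\in\mathcal L(\mathcal D)$, $J^\times\in\mathcal L(\mathcal D^\times)$ is the adjoint: $\langle F,Jg\rangle=\langle J^\times F,g\rangle$ for $F\in\mathcal D^\times,g\in\mathcal D$; similarly $K\in\mathcal L(\mathcal D^\times)$ has adjoint $K^\times\in\mathcal L(\mathcal D)$. *)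

theory Defs
  imports "HOL-Analysis.Analysis" "HOL-Library.Function_Algebras"
begin

text \<open>The Hilbert space H is the whole type 'h, with addition from ab_group_add,
complex scalar multiplication sm and inner product ip (linear in the first,
conjugate linear in the second argument).\<close>

definition hnorm :: "('h \<Rightarrow> 'h \<Rightarrow> complex) \<Rightarrow> 'h \<Rightarrow> real" where
  "hnorm ip x = sqrt (Re (ip x x))"

definition complex_hilbert ::
  "(complex \<Rightarrow> 'h::ab_group_add \<Rightarrow> 'h) \<Rightarrow> ('h \<Rightarrow> 'h \<Rightarrow> complex) \<Rightarrow> bool" where
  "complex_hilbert sm ip \<longleftrightarrow>
     (\<forall>a x y. sm a (x + y) = sm a x + sm a y) \<and>
     (\<forall>a b x. sm (a + b) x = sm a x + sm b x) \<and>
     (\<forall>a b x. sm a (sm b x) = sm (a * b) x) \<and>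
     (\<forall>x. sm 1 x = x) \<and>
     (\<forall>x y z. ip (x + y) z = ip x z + ip y z) \<and>
     (\<forall>a x y. ip (sm a x) y = a * ip x y) \<and>
     (\<forall>x y. ip y x = cnj (ip x y)) \<and>
     (\<forall>x. Im (ip x x) = 0 \<and> 0 \<le> Re (ip x x)) \<and>
     (\<forall>x. ip x x = 0 \<longrightarrow> x = 0) \<and>
     (\<forall>X::nat \<Rightarrow> 'h. (\<forall>e>0. \<exists>N. \<forall>m\<ge>N. \<forall>n\<ge>N. hnorm ip (X m - X n) < e) \<longrightarrow>
          (\<exists>L. \<forall>e>0. \<exists>N. \<forall>n\<ge>N. hnorm ip (X n - L) < e))"

definition is_seminorm_on ::
  "(complex \<Rightarrow> 'a::ab_group_add \<Rightarrow> 'a) \<Rightarrow> 'a set \<Rightarrow> ('a \<Rightarrow> real) \<Rightarrow> bool" where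
  "is_seminorm_on sm S p \<longleftrightarrow>
     (\<forall>x\<in>S. \<forall>y\<in>S. p (x + y) \<le> p x + p y) \<and> (\<forall>c. \<forall>x\<in>S. p (sm c x) = cmod c * p x)"

definition seminorm_topology :: "'a::ab_group_add set \<Rightarrow> ('a \<Rightarrow> real) set \<Rightarrow> 'a topology" where
  "seminorm_topology S Q =
     topology_generated_by (insert S {{y\<in>S. q (y - x) < r} | q x r. q \<in> Q \<and> x \<in> S})"

definition bounded_set :: "'a set \<Rightarrow> ('a \<Rightarrow> real) set \<Rightarrow> 'a set \<Rightarrow> bool" where
  "bounded_set S Q B \<longleftrightarrow> B \<subseteq> S \<and> (\<forall>q\<in>Q. bdd_above (q ` B))"

definition conj_dual ::
  "(complex \<Rightarrow> 'a::ab_group_add \<Rightarrow> 'a) \<Rightarrow> 'a set \<Rightarrow> ('a \<Rightarrow> real) set \<Rightarrow> ('a \<Rightarrow> complex) set" where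
  "conj_dual sm S Q = {F. continuous_map (seminorm_topology S Q) euclidean F \<and>
      (\<forall>x\<in>S. \<forall>y\<in>S. F (x + y) = F x + F y) \<and>
      (\<forall>c. \<forall>x\<in>S. F (sm c x) = cnj c * F x) \<and>
      (\<forall>x. x \<notin> S \<longrightarrow> F x = 0)}"

text \<open>Seminorms of the strong dual topology (uniform convergence on bounded sets).\<close>
definition strong_seminorms ::
  "'a set \<Rightarrow> ('a \<Rightarrow> real) set \<Rightarrow> (('a \<Rightarrow> complex) \<Rightarrow> real) set" where
  "strong_seminorms S Q =
     {(\<lambda>F. SUP x\<in>B. cmod (F x)) | B. bounded_set S Q B \<and> B \<noteq> {}}"

definition dual_sm :: "complex \<Rightarrow> ('a \<Rightarrow> complex) \<Rightarrow> ('a \<Rightarrow> complex)" where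
  "dual_sm c F = (\<lambda>x. c * F x)"

text \<open>Canonical map of S into its conjugate bidual: f maps to F \<mapsto> <f,F> = cnj (F f).\<close>
definition canonical_bidual ::
  "(complex \<Rightarrow> 'a::ab_group_add \<Rightarrow> 'a) \<Rightarrow> 'a set \<Rightarrow> ('a \<Rightarrow> real) set \<Rightarrow> 'a \<Rightarrow> (('a \<Rightarrow> complex) \<Rightarrow> complex)" where
  "canonical_bidual sm S Q f = (\<lambda>F. if F \<in> conj_dual sm S Q then cnj (F f) else 0)"

definition reflexive_lcs :: "(complex \<Rightarrow> 'a::ab_group_add \<Rightarrow> 'a) \<Rightarrow> 'a set \<Rightarrow> ('a \<Rightarrow> real) set \<Rightarrow> bool" where
  "reflexive_lcs sm S Q \<longleftrightarrow>
     (let Dx = conj_dual sm S Q; Qx = strong_seminorms S Q;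
          Dxx = conj_dual dual_sm Dx Qx; Qxx = strong_seminorms Dx Qx
      in canonical_bidual sm S Q ` S = Dxx \<and>
         homeomorphic_map (seminorm_topology S Q) (seminorm_topology Dxx Qxx)
           (canonical_bidual sm S Q))"

definition rigged_hilbert ::
  "(complex \<Rightarrow> 'h::ab_group_add \<Rightarrow> 'h) \<Rightarrow> ('h \<Rightarrow> 'h \<Rightarrow> complex) \<Rightarrow> 'h set \<Rightarrow> ('h \<Rightarrow> real) set \<Rightarrow> bool" where
  "rigged_hilbert sm ip D P \<longleftrightarrow>
     complex_hilbert sm ip \<and>
     \<comment> \<open>D is a linear subspace\<close>
     0 \<in> D \<and> (\<forall>f\<in>D. \<forall>g\<in>D. f + g \<in> D) \<and> (\<forall>c. \<forall>f\<in>D. sm c f \<in> D) \<and>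
     \<comment> \<open>D is dense in H\<close>
     (\<forall>h. \<forall>e>0. \<exists>f\<in>D. hnorm ip (h - f) < e) \<and>
     \<comment> \<open>t is a locally convex topology given by the seminorms P\<close>
     (\<forall>p\<in>P. is_seminorm_on sm D p) \<and>
     \<comment> \<open>t is finer than the norm topology on D\<close>
     (\<forall>U. U \<subseteq> D \<and> (\<forall>f\<in>U. \<exists>e>0. {g\<in>D. hnorm ip (g - f) < e} \<subseteq> U)
          \<longrightarrow> openin (seminorm_topology D P) U)"

text \<open>Embedding of H into D^x: h is identified with the functional f \<mapsto> <h,f>.\<close>
definition emb :: "('h \<Rightarrow> 'h \<Rightarrow> complex) \<Rightarrow> 'h set \<Rightarrow> 'h \<Rightarrow> ('h \<Rightarrow> complex)" where
  "emb ip D h = (\<lambda>f. if f \<in> D then ip h f else 0)"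

definition cont_ops ::
  "(complex \<Rightarrow> 'a::ab_group_add \<Rightarrow> 'a) \<Rightarrow> 'a set \<Rightarrow> ('a \<Rightarrow> real) set \<Rightarrow> ('a \<Rightarrow> 'a) set" where
  "cont_ops sm S Q = {J. J ` S \<subseteq> S \<and>
      (\<forall>x\<in>S. \<forall>y\<in>S. J (x + y) = J x + J y) \<and> (\<forall>c. \<forall>x\<in>S. J (sm c x) = sm c (J x)) \<and>
      continuous_map (seminorm_topology S Q) (seminorm_topology S Q) J}"

definition adj_op :: "'h set \<Rightarrow> ('h \<Rightarrow> 'h) \<Rightarrow> ('h \<Rightarrow> complex) \<Rightarrow> ('h \<Rightarrow> complex)" where
  "adj_op D J F = (\<lambda>g. if g \<in> D then F (J g) else 0)"

text \<open><f, omega_x> = cnj (omega x f), <theta_x, g> = theta x g.\<close>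
definition mult_integrand ::
  "('x \<Rightarrow> complex) \<Rightarrow> ('x \<Rightarrow> 'h \<Rightarrow> complex) \<Rightarrow> ('x \<Rightarrow> 'h \<Rightarrow> complex) \<Rightarrow> 'h \<Rightarrow> 'h \<Rightarrow> 'x \<Rightarrow> complex" where
  "mult_integrand m \<omega> \<theta> f g x = m x * cnj (\<omega> x f) * \<theta> x g"

definition mult_domain ::
  "('h \<Rightarrow> 'h \<Rightarrow> complex) \<Rightarrow> 'h set \<Rightarrow> 'x measure \<Rightarrow> ('x \<Rightarrow> complex) \<Rightarrow>
   ('x \<Rightarrow> 'h \<Rightarrow> complex) \<Rightarrow> ('x \<Rightarrow> 'h \<Rightarrow> complex) \<Rightarrow> 'h set" where
  "mult_domain ip D \<mu> m \<omega> \<theta> = {f\<in>D.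
      (\<forall>g\<in>D. integrable \<mu> (mult_integrand m \<omega> \<theta> f g)) \<and>
      (\<exists>C. \<forall>g\<in>D. cmod (integral\<^sup>L \<mu> (mult_integrand m \<omega> \<theta> f g)) \<le> C * hnorm ip g)}"

text \<open>M f is the Riesz representative in H of the bounded functional.\<close>
definition multiplier ::
  "('h \<Rightarrow> 'h \<Rightarrow> complex) \<Rightarrow> 'h set \<Rightarrow> 'x measure \<Rightarrow> ('x \<Rightarrow> complex) \<Rightarrow>
   ('x \<Rightarrow> 'h \<Rightarrow> complex) \<Rightarrow> ('x \<Rightarrow> 'h \<Rightarrow> complex) \<Rightarrow> 'h \<Rightarrow> 'h" where
  "multiplier ip D \<mu> m \<omega> \<theta> f =
     (THE h. \<forall>g\<in>D. ip h g = integral\<^sup>L \<mu> (mult_integrand m \<omega> \<theta> f g))"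

end

theory Submission
  imports Defs
begin


locale chs =
  fixes sm :: "complex \<Rightarrow> 'h::ab_group_add \<Rightarrow> 'h" and ip :: "'h \<Rightarrow> 'h \<Rightarrow> complex"
  assumes ch: "complex_hilbert sm ip"
begin

lemmas ax = ch[unfolded complex_hilbert_def]
lemma sm_add_right: "sm a (x + y) = sm a x + sm a y" using ax[THEN conjunct1] by blast
lemma sm_add_left: "sm (a + b) x = sm a x + sm b x" using ax[THEN conjunct2, THEN conjunct1] by blast
lemma sm_sm: "sm a (sm b x) = sm (a * b) x" using ax[THEN conjunct2, THEN conjunct2, THEN conjunct1] by blast
lemma sm_one: "sm 1 x = x" using ax[THEN conjunct2, THEN conjunct2, THEN conjunct2, THEN conjunct1] by blast
lemma ip_add_left: "ip (x + y) z = ip x z + ip y z" using ax[THEN conjunct2, THEN conjunct2, THEN conjunct2, THEN conjunct2, THEN conjunct1] by blast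
lemma ip_sm_left: "ip (sm a x) y = a * ip x y" using ax[THEN conjunct2, THEN conjunct2, THEN conjunct2, THEN conjunct2, THEN conjunct2, THEN conjunct1] by blast
lemma ip_sym: "ip y x = cnj (ip x y)" using ax[THEN conjunct2, THEN conjunct2, THEN conjunct2, THEN conjunct2, THEN conjunct2, THEN conjunct2, THEN conjunct1] by blast
lemma ip_pos: "Im (ip x x) = 0" "0 \<le> Re (ip x x)" using ax[THEN conjunct2, THEN conjunct2, THEN conjunct2, THEN conjunct2, THEN conjunct2, THEN conjunct2, THEN conjunct2, THEN conjunct1] by blast+
lemma ip_def0: "ip x x = 0 \<Longrightarrow> x = 0" using ax[THEN conjunct2, THEN conjunct2, THEN conjunct2, THEN conjunct2, THEN conjunct2, THEN conjunct2, THEN conjunct2, THEN conjunct2, THEN conjunct1] by blast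
lemma complete: fixes X :: "nat \<Rightarrow> 'h" assumes "\<forall>e>0. \<exists>N. \<forall>m\<ge>N. \<forall>n\<ge>N. hnorm ip (X m - X n) < e"
  shows "\<exists>L. \<forall>e>0. \<exists>N. \<forall>n\<ge>N. hnorm ip (X n - L) < e"
proof -
  have "\<forall>X::nat\<Rightarrow>'h. (\<forall>e>0. \<exists>N. \<forall>m\<ge>N. \<forall>n\<ge>N. hnorm ip (X m - X n) < e) \<longrightarrow>
          (\<exists>L. \<forall>e>0. \<exists>N. \<forall>n\<ge>N. hnorm ip (X n - L) < e)"
    by (rule ax[THEN conjunct2, THEN conjunct2, THEN conjunct2, THEN conjunct2, THEN conjunct2, THEN conjunct2, THEN conjunct2, THEN conjunct2, THEN conjunct2])
  then show ?thesis using assms by blast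
qed

lemma sm_zero: "sm 0 x = 0"
proof -
  have "sm 0 x = sm 0 x + sm 0 x" using sm_add_left[of 0 0 x] by simp
  then show ?thesis by simp
qed

lemma sm_minus_one: "sm (-1) x = - x"
proof -
  have "sm 1 x + sm (-1) x = 0" using sm_add_left[of 1 "-1" x] sm_zero by simp
  then show ?thesis using sm_one by (simp add: add_eq_0_iff)
qed

lemma diff_sm: "x - y = x + sm (-1) y" by (simp add: sm_minus_one)

lemma ip_add_right: "ip z (x + y) = ip z x + ip z y"
  by (metis ip_add_left ip_sym complex_cnj_add)
lemma ip_sm_right: "ip x (sm a y) = cnj a * ip x y"
  by (metis ip_sm_left ip_sym complex_cnj_mult)
lemma ip_zero_left: "ip 0 y = 0"
  using ip_add_left[of 0 0 y] by simp
lemma ip_zero_right: "ip y 0 = 0"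
  using ip_add_right[of y 0 0] by simp
lemma ip_minus_left: "ip (- x) y = - ip x y"
  using ip_add_left[of x "-x" y] ip_zero_left by (metis add.commute eq_neg_iff_add_eq_0 right_minus)
lemma ip_minus_right: "ip y (- x) = - ip y x"
  using ip_add_right[of y x "-x"] ip_zero_right by (metis add.commute eq_neg_iff_add_eq_0 right_minus)
lemma ip_diff_left: "ip (x - y) z = ip x z - ip y z"
  unfolding diff_conv_add_uminus ip_add_left ip_minus_left by simp
lemma ip_diff_right: "ip z (x - y) = ip z x - ip z y"
  unfolding diff_conv_add_uminus ip_add_right ip_minus_right by simp

definition Nq :: "'h \<Rightarrow> real" where "Nq x = Re (ip x x)"

lemma N_nonneg: "0 \<le> Nq x" unfolding Nq_def by (rule ip_pos(2))
lemma mcnj: "a * cnj a = complex_of_real ((cmod a)^2)" by (rule complex_norm_square[symmetric])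
lemma ip_self: "ip x x = complex_of_real (Nq x)"
  using ip_pos(1)[of x] by (simp add: Nq_def complex_eq_iff)
lemma hnorm_N: "hnorm ip x = sqrt (Nq x)" by (simp add: hnorm_def Nq_def)
lemma hnorm_sq: "(hnorm ip x)^2 = Nq x" using N_nonneg[of x] by (simp add: hnorm_N)
lemma hnorm_nonneg: "0 \<le> hnorm ip x" using N_nonneg[of x] by (simp add: hnorm_N)

lemma N_add: "Nq (x + y) = Nq x + Nq y + 2 * Re (ip x y)"
proof -
  have "ip (x+y) (x+y) = ip x x + ip x y + ip y x + ip y y"
    by (simp add: ip_add_left ip_add_right)
  moreover have "Re (ip y x) = Re (ip x y)" by (subst ip_sym) simp
  ultimately show ?thesis by (simp add: Nq_def)
qed

lemma N_diff: "Nq (x - y) = Nq x + Nq y - 2 * Re (ip x y)"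
proof -
  have "ip (x-y) (x-y) = ip x x - ip x y - ip y x + ip y y"
    by (simp add: ip_diff_left ip_diff_right)
  moreover have "Re (ip y x) = Re (ip x y)" by (subst ip_sym) simp
  ultimately show ?thesis by (simp add: Nq_def)
qed

lemma N_sm: "Nq (sm a x) = (cmod a)^2 * Nq x"
proof -
  have "ip (sm a x) (sm a x) = (a * cnj a) * ip x x" by (simp add: ip_sm_left ip_sm_right)
  also have "\<dots> = complex_of_real ((cmod a)^2) * complex_of_real (Nq x)"
    by (simp only: ip_self mcnj)
  also have "\<dots> = complex_of_real ((cmod a)^2 * Nq x)" by simp
  finally show ?thesis by (simp add: Nq_def)
qed

lemma N_zero_iff: "Nq x = 0 \<Longrightarrow> x = 0" using ip_self ip_def0 by simp

lemma CS: "cmod (ip x y) \<le> hnorm ip x * hnorm ip y"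
proof (cases "Nq y = 0")
  case True
  then have "y = 0" by (rule N_zero_iff)
  then show ?thesis by (simp add: ip_zero_right hnorm_nonneg)
next
  case False
  then have Ny: "Nq y > 0" using N_nonneg[of y] by linarith
  define z where "z = ip x y"
  define a where "a = - z / complex_of_real (Nq y)"
  have "0 \<le> Nq (x + sm a y)" by (rule N_nonneg)
  also have "Nq (x + sm a y) = Nq x + 2 * Re (cnj a * z) + (cmod a)^2 * Nq y"
    by (simp add: N_add N_sm ip_sm_right z_def)
  also have "cnj a * z = - (z * cnj z) / complex_of_real (Nq y)"
    unfolding a_def by (simp add: field_simps)
  also have "\<dots> = - complex_of_real ((cmod z)^2 / Nq y)"
    by (simp only: mcnj) simp
  also have "(cmod a)^2 = (cmod z)^2 / (Nq y)^2"
    unfolding a_def using Ny by (simp add: norm_divide power_divide)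
  finally have "0 \<le> Nq x + 2 * (- ((cmod z)^2 / Nq y)) + (cmod z)^2 / (Nq y)^2 * Nq y" by simp
  then have "0 \<le> Nq x - (cmod z)^2 / Nq y" using Ny by (simp add: power2_eq_square field_simps)
  then have "(cmod z)^2 \<le> Nq x * Nq y" using Ny by (simp add: field_simps)
  then have "sqrt ((cmod z)^2) \<le> sqrt (Nq x * Nq y)" using real_sqrt_le_mono by blast
  then show ?thesis by (simp add: z_def hnorm_N real_sqrt_mult)
qed


lemma uniq_D:
  assumes dense: "\<forall>h. \<forall>e>0. \<exists>f\<in>D. hnorm ip (h - f) < e"
    and orth: "\<forall>g\<in>D. ip d g = 0"
  shows "d = 0"
proof (rule ccontr)
  assume "d \<noteq> 0"
  then have "Nq d \<noteq> 0" using N_zero_iff by blast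
  then have Np: "Nq d > 0" using N_nonneg[of d] by linarith
  then have hp: "hnorm ip d > 0" by (simp add: hnorm_N)
  obtain g where g: "g \<in> D" "hnorm ip (d - g) < hnorm ip d / 2"
    using dense hp by (meson half_gt_zero)
  have "ip d d = ip d (d - g) + ip d g" by (simp add: ip_diff_right)
  also have "\<dots> = ip d (d - g)" using orth g by simp
  finally have "cmod (ip d d) \<le> hnorm ip d * hnorm ip (d - g)" using CS by simp
  also have "\<dots> \<le> hnorm ip d * (hnorm ip d / 2)"
    using g(2) hp by (intro mult_left_mono) auto
  finally have "Nq d \<le> hnorm ip d * (hnorm ip d / 2)" using ip_self N_nonneg by simp
  moreover have "Nq d = hnorm ip d * hnorm ip d" using hnorm_sq[of d] by (simp add: power2_eq_square)
  ultimately show False using hp by (simp add: field_simps)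
qed

lemma quad_zero:
  fixes a b :: real
  assumes "\<forall>t. 0 \<le> 2 * t * a + t^2 * b" "0 \<le> b"
  shows "a = 0"
proof (rule ccontr)
  assume a: "a \<noteq> 0"
  define t where "t = - a / (b + 1)"
  have bp: "b + 1 > 0" using assms by simp
  have "0 \<le> 2 * t * a + t^2 * b" using assms by simp
  then have "0 \<le> (2 * t * a + t^2 * b) * (b+1)^2" using bp by simp
  also have "(2 * t * a + t^2 * b) * (b+1)^2 = 2*a*(t*(b+1))*(b+1) + (t*(b+1))^2*b"
    by (simp add: power2_eq_square algebra_simps)
  also have "t * (b+1) = -a" unfolding t_def using bp by simp
  also have "2*a*(-a)*(b+1) + (-a)^2*b = -(a^2 * (b + 2))" by (simp add: power2_eq_square algebra_simps)
  finally have "0 \<le> -(a^2 * (b + 2))" .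
  moreover have "a^2 > 0" using a by simp
  ultimately show False using assms(2)
    by (smt (verit, best) mult_pos_pos)
qed

lemma riesz:
  assumes D0: "0 \<in> D" and Dadd: "\<forall>f\<in>D. \<forall>g\<in>D. f + g \<in> D" and Dsm: "\<forall>c. \<forall>f\<in>D. sm c f \<in> D"
    and dense: "\<forall>h. \<forall>e>0. \<exists>f\<in>D. hnorm ip (h - f) < e"
    and Padd: "\<And>f g. f \<in> D \<Longrightarrow> g \<in> D \<Longrightarrow> \<Phi> (f + g) = \<Phi> f + \<Phi> g"
    and Psm: "\<And>c f. f \<in> D \<Longrightarrow> \<Phi> (sm c f) = cnj c * \<Phi> f"
    and Pb: "\<And>g. g \<in> D \<Longrightarrow> cmod (\<Phi> g) \<le> C * hnorm ip g"
  shows "\<exists>!h. \<forall>g\<in>D. ip h g = \<Phi> g"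
proof -
  define E where "E u = Nq u - 2 * Re (\<Phi> u)" for u
  have Elow: "- (C^2) \<le> E u" if "u \<in> D" for u
  proof -
    have "Re (\<Phi> u) \<le> cmod (\<Phi> u)" by (rule complex_Re_le_cmod)
    also have "\<dots> \<le> C * hnorm ip u" using Pb that by simp
    also have "\<dots> \<le> \<bar>C\<bar> * hnorm ip u" using hnorm_nonneg[of u] by (simp add: mult_right_mono)
    finally have 1: "Re (\<Phi> u) \<le> \<bar>C\<bar> * hnorm ip u" .
    have 2: "0 \<le> (hnorm ip u - \<bar>C\<bar>)^2" by simp
    have "Nq u = (hnorm ip u)^2" by (simp add: hnorm_sq)
    then show ?thesis unfolding E_def using 1 2 by (simp add: power2_eq_square algebra_simps)
  qed
  define I where "I = Inf (E ` D)"
  have bdd: "bdd_below (E ` D)" using Elow by (auto intro!: bdd_belowI[of _ "- (C^2)"])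
  have IE: "I \<le> E u" if "u \<in> D" for u unfolding I_def using bdd that by (simp add: cInf_lower)
  have key: "Nq (u - v) \<le> 2 * E u + 2 * E v - 4 * I" if "u \<in> D" "v \<in> D" for u v
  proof -
    define w where "w = sm (1/2) (u + v)"
    have wD: "w \<in> D" unfolding w_def using that Dadd Dsm by blast
    have pw: "\<Phi> w = (\<Phi> u + \<Phi> v) / 2" unfolding w_def using that Dadd
      by (simp add: Psm Padd)
    have rw: "Re (\<Phi> w) = (Re (\<Phi> u) + Re (\<Phi> v)) / 2" unfolding pw by simp
    have "Nq w = Nq (u + v) / 4" unfolding w_def by (simp add: N_sm power2_eq_square)
    then have "E w = Nq (u + v) / 4 - Re (\<Phi> u) - Re (\<Phi> v)" unfolding E_def rw by (simp add: field_simps)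
    moreover have "Nq (u + v) + Nq (u - v) = 2 * Nq u + 2 * Nq v" by (simp add: N_add N_diff)
    moreover have "I \<le> E w" using IE wD by simp
    ultimately show ?thesis unfolding E_def by simp
  qed
  have "\<forall>n. \<exists>u. u \<in> D \<and> E u < I + 1 / real (Suc n)"
  proof
    fix n
    have "Inf (E ` D) < I + 1 / real (Suc n)" unfolding I_def by simp
    then obtain y where "y \<in> E ` D" "y < I + 1 / real (Suc n)"
      using cInf_lessD[of "E ` D"] D0 by blast
    then show "\<exists>u. u \<in> D \<and> E u < I + 1 / real (Suc n)" by blast
  qed
  then obtain u where u: "\<And>n. u n \<in> D" "\<And>n. E (u n) < I + 1 / real (Suc n)" by metis
  have cauchy: "\<forall>e>0. \<exists>M. \<forall>m\<ge>M. \<forall>n\<ge>M. hnorm ip (u m - u n) < e"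
  proof (intro allI impI)
    fix e :: real assume e: "e > 0"
    obtain M where M: "4 / e^2 < real M" using reals_Archimedean2 by blast
    have "4 / real (Suc M) < e^2"
      using M e by (simp add: field_simps) (smt (verit) mult_strict_left_mono power2_eq_square zero_less_power)
    show "\<exists>M. \<forall>m\<ge>M. \<forall>n\<ge>M. hnorm ip (u m - u n) < e"
    proof (intro exI allI impI)
      fix m n assume mn: "M \<le> m" "M \<le> n"
      have a: "1 / real (Suc m) \<le> 1 / real (Suc M)" "1 / real (Suc n) \<le> 1 / real (Suc M)"
        using mn by (simp_all add: frac_le)
      have "Nq (u m - u n) \<le> 2 * E (u m) + 2 * E (u n) - 4 * I" using key u by simp
      also have "\<dots> < 2 * (1 / real (Suc m)) + 2 * (1 / real (Suc n))" using u(2)[of m] u(2)[of n] by simp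
      also have "\<dots> \<le> 4 / real (Suc M)" using a by simp
      also have "\<dots> < e^2" by fact
      finally have "sqrt (Nq (u m - u n)) < sqrt (e^2)" by (simp only: real_sqrt_less_mono)
      then show "hnorm ip (u m - u n) < e" using e by (simp add: hnorm_N)
    qed
  qed
  obtain h where h: "\<forall>e>0. \<exists>M. \<forall>n\<ge>M. hnorm ip (u n - h) < e" using complete[OF cauchy] by blast
  have hlim: "(\<lambda>n. hnorm ip (u n - h)) \<longlonglongrightarrow> 0"
    unfolding lim_sequentially using h hnorm_nonneg by (simp add: dist_real_def)
  have reeq: "Re (ip h g) = Re (\<Phi> g)" if gD: "g \<in> D" for g
  proof -
    define a where "a n = Re (ip (u n) g) - Re (\<Phi> g)" for n
    define a0 where "a0 = Re (ip h g) - Re (\<Phi> g)"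
    have alim: "a \<longlonglongrightarrow> a0"
    proof -
      have "(\<lambda>n. a n - a0) \<longlonglongrightarrow> 0"
      proof (rule Lim_null_comparison)
        show "\<forall>\<^sub>F n in sequentially. norm (a n - a0) \<le> hnorm ip (u n - h) * hnorm ip g"
        proof (intro always_eventually allI)
          fix n
          have "a n - a0 = Re (ip (u n - h) g)" unfolding a_def a0_def by (simp add: ip_diff_left)
          then have "norm (a n - a0) \<le> cmod (ip (u n - h) g)" by (simp add: abs_Re_le_cmod)
          also have "\<dots> \<le> hnorm ip (u n - h) * hnorm ip g" by (rule CS)
          finally show "norm (a n - a0) \<le> hnorm ip (u n - h) * hnorm ip g" .
        qed
        show "(\<lambda>n. hnorm ip (u n - h) * hnorm ip g) \<longlonglongrightarrow> 0"
          using tendsto_mult[OF hlim tendsto_const[of "hnorm ip g"]] by simp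
      qed
      then show ?thesis by (simp add: LIM_zero_iff)
    qed
    have "\<forall>t. 0 \<le> 2 * t * a0 + t^2 * Nq g"
    proof
      fix t :: real
      have ineq: "0 \<le> 1 / real (Suc n) + 2 * t * a n + t^2 * Nq g" for n
      proof -
        have D1: "u n + sm (complex_of_real t) g \<in> D" using u(1) gD Dadd Dsm by blast
        have "Nq (u n + sm (complex_of_real t) g) = Nq (u n) + t^2 * Nq g + 2 * t * Re (ip (u n) g)"
          by (simp add: N_add N_sm ip_sm_right)
        moreover have "\<Phi> (u n + sm (complex_of_real t) g) = \<Phi> (u n) + complex_of_real t * \<Phi> g"
          using u(1) gD Dsm by (simp add: Padd Psm)
        ultimately have "E (u n + sm (complex_of_real t) g) = E (u n) + 2 * t * a n + t^2 * Nq g"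
          unfolding E_def a_def by (simp add: algebra_simps)
        moreover have "I \<le> E (u n + sm (complex_of_real t) g)" using IE D1 by simp
        ultimately show ?thesis using u(2)[of n] by simp
      qed
      have "(\<lambda>n. 1 / real (Suc n) + 2 * t * a n + t^2 * Nq g) \<longlonglongrightarrow> 0 + 2 * t * a0 + t^2 * Nq g"
        by (intro tendsto_intros alim LIMSEQ_Suc[OF lim_inverse_n'] ) 
      then show "0 \<le> 2 * t * a0 + t^2 * Nq g"
        using ineq by (intro LIMSEQ_le_const) auto
    qed
    then have "a0 = 0" using quad_zero N_nonneg by blast
    then show ?thesis unfolding a0_def by simp
  qed
  have "ip h g = \<Phi> g" if gD: "g \<in> D" for g
  proof (rule complex_eqI)
    show "Re (ip h g) = Re (\<Phi> g)" using reeq gD by simp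
    have "sm \<i> g \<in> D" using gD Dsm by blast
    then have "Re (ip h (sm \<i> g)) = Re (\<Phi> (sm \<i> g))" using reeq by simp
    then show "Im (ip h g) = Im (\<Phi> g)" using gD by (simp add: ip_sm_right Psm)
  qed
  then have ex: "\<forall>g\<in>D. ip h g = \<Phi> g" by blast
  show ?thesis
  proof (rule ex1I[of _ h])
    show "\<forall>g\<in>D. ip h g = \<Phi> g" by (fact ex)
    fix h' assume h': "\<forall>g\<in>D. ip h' g = \<Phi> g"
    have "\<forall>g\<in>D. ip (h' - h) g = 0" using ex h' by (simp add: ip_diff_left)
    then have "h' - h = 0" using uniq_D dense by blast
    then show "h' = h" by simp
  qed
qed

end


lemma cmap_mult: "continuous_map X euclidean (f::_\<Rightarrow>complex) \<Longrightarrow> continuous_map X euclidean (\<lambda>x. c * f x)"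
  by (simp add: continuous_map_atin tendsto_mult_left)
lemma cmap_cnj: "continuous_map X euclidean (f::_\<Rightarrow>complex) \<Longrightarrow> continuous_map X euclidean (\<lambda>x. cnj (f x))"
  by (simp add: continuous_map_atin tendsto_cnj)

lemma semi_topspace: "topspace (seminorm_topology S Q) = S"
  unfolding seminorm_topology_def by auto

lemma basis_open: "q \<in> Q \<Longrightarrow> x \<in> S \<Longrightarrow> openin (seminorm_topology S Q) {y\<in>S. q (y - x) < r}"
  unfolding seminorm_topology_def openin_topology_generated_by_iff
  by (rule generate_topology_on.Basis) blast

lemma cd_cont: "F \<in> conj_dual sm S Q \<Longrightarrow> continuous_map (seminorm_topology S Q) euclidean F"
  unfolding conj_dual_def by blast
lemma cd_add: "F \<in> conj_dual sm S Q \<Longrightarrow> x \<in> S \<Longrightarrow> y \<in> S \<Longrightarrow> F (x + y) = F x + F y"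
  unfolding conj_dual_def by blast
lemma cd_sm: "F \<in> conj_dual sm S Q \<Longrightarrow> x \<in> S \<Longrightarrow> F (sm c x) = cnj c * F x"
  unfolding conj_dual_def by blast
lemma cd_out: "F \<in> conj_dual sm S Q \<Longrightarrow> x \<notin> S \<Longrightarrow> F x = 0"
  unfolding conj_dual_def by blast

lemma dual_sm_in: "F \<in> conj_dual sm S Q \<Longrightarrow> dual_sm c F \<in> conj_dual sm S Q"
  unfolding conj_dual_def dual_sm_def
  by (auto simp: cmap_mult algebra_simps)

lemma dual_add_in: "F \<in> conj_dual sm S Q \<Longrightarrow> G \<in> conj_dual sm S Q \<Longrightarrow> F + G \<in> conj_dual sm S Q"
proof -
  assume F: "F \<in> conj_dual sm S Q" and G: "G \<in> conj_dual sm S Q"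
  have "continuous_map (seminorm_topology S Q) euclidean (\<lambda>x. F x + G x)"
    using cd_cont[OF F] cd_cont[OF G] by (rule continuous_map_add)
  then have c: "continuous_map (seminorm_topology S Q) euclidean (F + G)"
    by (simp add: plus_fun_def)
  show ?thesis unfolding conj_dual_def
  proof (intro CollectI conjI ballI allI impI)
    show "continuous_map (seminorm_topology S Q) euclidean (F + G)" by (fact c)
    fix x y assume "x \<in> S" "y \<in> S"
    then show "(F + G) (x + y) = (F + G) x + (F + G) y" using cd_add[OF F] cd_add[OF G] by simp
  next
    fix c x assume "x \<in> S"
    then show "(F + G) (sm c x) = cnj c * (F + G) x" using cd_sm[OF F] cd_sm[OF G]
      by (simp add: distrib_left)
  next
    fix x assume "x \<notin> S"
    then show "(F + G) x = 0" using cd_out[OF F] cd_out[OF G] by simp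
  qed
qed

lemma eval_cont:
  assumes g: "g \<in> S"
  shows "continuous_map (seminorm_topology (conj_dual sm S Q) (strong_seminorms S Q)) euclidean (\<lambda>F. F g)"
  unfolding continuous_map_openin_preimage_eq
proof (intro conjI allI impI)
  show "(\<lambda>F. F g) \<in> topspace (seminorm_topology (conj_dual sm S Q) (strong_seminorms S Q)) \<rightarrow> topspace euclidean"
    by simp
  fix U :: "complex set" assume "openin euclidean U"
  then have U: "open U" by simp
  define q where "q = (\<lambda>F::'a \<Rightarrow> complex. SUP x\<in>{g}. cmod (F x))"
  have bs: "bounded_set S Q {g}" unfolding bounded_set_def using g by simp
  have qQ: "q \<in> strong_seminorms S Q"
    unfolding strong_seminorms_def q_def using bs by blast
  have qv: "q G = cmod (G g)" for G unfolding q_def by simp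
  show "openin (seminorm_topology (conj_dual sm S Q) (strong_seminorms S Q))
          (topspace (seminorm_topology (conj_dual sm S Q) (strong_seminorms S Q)) \<inter> (\<lambda>F. F g) -` U)"
    unfolding semi_topspace openin_subopen[of _ "conj_dual sm S Q \<inter> (\<lambda>F. F g) -` U"]
  proof
    fix F0 assume F0: "F0 \<in> conj_dual sm S Q \<inter> (\<lambda>F. F g) -` U"
    then have "F0 g \<in> U" by simp
    then obtain r where r: "r > 0" "ball (F0 g) r \<subseteq> U" using U openE by blast
    let ?T = "{G \<in> conj_dual sm S Q. q (G - F0) < r}"
    have "openin (seminorm_topology (conj_dual sm S Q) (strong_seminorms S Q)) ?T"
      using F0 by (intro basis_open[OF qQ]) blast
    moreover have "F0 \<in> ?T" using F0 r by (simp add: qv)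
    moreover have "?T \<subseteq> conj_dual sm S Q \<inter> (\<lambda>F. F g) -` U"
    proof
      fix G assume "G \<in> ?T"
      then have "G \<in> conj_dual sm S Q" "cmod (G g - F0 g) < r" by (auto simp: qv)
      then show "G \<in> conj_dual sm S Q \<inter> (\<lambda>F. F g) -` U"
        using r by (auto simp: dist_norm norm_minus_commute)
    qed
    ultimately show "\<exists>T. openin (seminorm_topology (conj_dual sm S Q) (strong_seminorms S Q)) T \<and> F0 \<in> T \<and>
              T \<subseteq> conj_dual sm S Q \<inter> (\<lambda>F. F g) -` U" by blast
  qed
qed

lemma rh_parts:
  assumes "rigged_hilbert sm ip D P"
  shows "complex_hilbert sm ip" "0 \<in> D" "\<forall>f\<in>D. \<forall>g\<in>D. f + g \<in> D" "\<forall>c. \<forall>f\<in>D. sm c f \<in> D"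
    "\<forall>h. \<forall>e>0. \<exists>f\<in>D. hnorm ip (h - f) < e"
    "\<forall>U. U \<subseteq> D \<and> (\<forall>f\<in>U. \<exists>e>0. {g\<in>D. hnorm ip (g - f) < e} \<subseteq> U)
          \<longrightarrow> openin (seminorm_topology D P) U"
  using assms unfolding rigged_hilbert_def by blast+

lemma emb_in:
  assumes rhs: "rigged_hilbert sm ip D P"
  shows "emb ip D h \<in> conj_dual sm D P"
proof -
  note R = rh_parts[OF rhs]
  interpret chs sm ip by unfold_locales (rule R(1))
  have cont: "continuous_map (seminorm_topology D P) euclidean (emb ip D h)"
    unfolding continuous_map_openin_preimage_eq semi_topspace
  proof (intro conjI allI impI)
    show "emb ip D h \<in> D \<rightarrow> topspace euclidean" by simp
    fix U :: "complex set" assume "openin euclidean U"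
    then have U: "open U" by simp
    show "openin (seminorm_topology D P) (D \<inter> emb ip D h -` U)"
    proof (rule R(6)[rule_format], intro conjI ballI)
      show "D \<inter> emb ip D h -` U \<subseteq> D" by blast
      fix f assume f: "f \<in> D \<inter> emb ip D h -` U"
      then have fD: "f \<in> D" and "ip h f \<in> U" by (auto simp: emb_def)
      then obtain r where r: "r > 0" "ball (ip h f) r \<subseteq> U" using U openE by blast
      define e where "e = r / (hnorm ip h + 1)"
      have hp: "hnorm ip h + 1 > 0" using hnorm_nonneg[of h] by linarith
      have e: "e > 0" unfolding e_def using r hp by simp
      have "{g\<in>D. hnorm ip (g - f) < e} \<subseteq> D \<inter> emb ip D h -` U"
      proof
        fix g assume g: "g \<in> {g\<in>D. hnorm ip (g - f) < e}"
        have "cmod (ip h g - ip h f) = cmod (ip h (g - f))" by (simp add: ip_diff_right)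
        also have "\<dots> \<le> hnorm ip h * hnorm ip (g - f)" by (rule CS)
        also have "\<dots> \<le> (hnorm ip h + 1) * e"
          using g hnorm_nonneg[of h] hnorm_nonneg[of "g - f"]
          by (intro mult_mono) auto
        also have "\<dots> = r" unfolding e_def using hp by simp
        finally have "cmod (ip h g - ip h f) \<le> r" .
        moreover have "cmod (ip h g - ip h f) \<noteq> r"
        proof
          assume eq: "cmod (ip h g - ip h f) = r"
          have "hnorm ip h * hnorm ip (g - f) < (hnorm ip h + 1) * e"
          proof (cases "hnorm ip h = 0")
            case True then show ?thesis using e by simp
          next
            case False
            then have "hnorm ip h > 0" using hnorm_nonneg[of h] by linarith
            then have "hnorm ip h * hnorm ip (g - f) < hnorm ip h * e" using g by simp
            also have "\<dots> \<le> (hnorm ip h + 1) * e" using e by (simp add: distrib_right)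
            finally show ?thesis .
          qed
          moreover have "cmod (ip h g - ip h f) \<le> hnorm ip h * hnorm ip (g - f)"
            using CS[of h "g - f"] by (simp add: ip_diff_right)
          ultimately show False using eq unfolding e_def using hp by simp
        qed
        ultimately have "cmod (ip h g - ip h f) < r" by simp
        then have "ip h g \<in> U" using r by (auto simp: dist_norm norm_minus_commute)
        then show "g \<in> D \<inter> emb ip D h -` U" using g by (simp add: emb_def)
      qed
      then show "\<exists>e>0. {g\<in>D. hnorm ip (g - f) < e} \<subseteq> D \<inter> emb ip D h -` U" using e by blast
    qed
  qed
  show ?thesis unfolding conj_dual_def
    using cont R(3,4) by (auto simp: emb_def ip_add_right ip_sm_right)
qed


lemma mult_rep:
  assumes rhs: "rigged_hilbert sm ip D P"
    and \<theta>_in: "\<forall>x\<in>space \<mu>. \<theta> x \<in> conj_dual sm D P"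
    and dom: "mult_domain ip D \<mu> m \<omega> \<theta> = D"
    and f: "f \<in> D"
  shows "\<forall>g\<in>D. ip (multiplier ip D \<mu> m \<omega> \<theta> f) g = integral\<^sup>L \<mu> (mult_integrand m \<omega> \<theta> f g)"
proof -
  note R = rh_parts[OF rhs]
  interpret chs sm ip by unfold_locales (rule R(1))
  from dom f have fd: "f \<in> mult_domain ip D \<mu> m \<omega> \<theta>" by simp
  then have int: "\<forall>g\<in>D. integrable \<mu> (mult_integrand m \<omega> \<theta> f g)"
    and "\<exists>C. \<forall>g\<in>D. cmod (integral\<^sup>L \<mu> (mult_integrand m \<omega> \<theta> f g)) \<le> C * hnorm ip g"
    unfolding mult_domain_def by auto
  then obtain C where C: "\<forall>g\<in>D. cmod (integral\<^sup>L \<mu> (mult_integrand m \<omega> \<theta> f g)) \<le> C * hnorm ip g"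
    by blast
  define \<Phi> where "\<Phi> g = integral\<^sup>L \<mu> (mult_integrand m \<omega> \<theta> f g)" for g
  have Padd: "\<Phi> (g1 + g2) = \<Phi> g1 + \<Phi> g2" if "g1 \<in> D" "g2 \<in> D" for g1 g2
  proof -
    have "\<Phi> (g1 + g2) = integral\<^sup>L \<mu> (\<lambda>x. mult_integrand m \<omega> \<theta> f g1 x + mult_integrand m \<omega> \<theta> f g2 x)"
      unfolding \<Phi>_def
    proof (rule Bochner_Integration.integral_cong[OF HOL.refl])
      fix x assume "x \<in> space \<mu>"
      then have "\<theta> x (g1 + g2) = \<theta> x g1 + \<theta> x g2" using \<theta>_in that cd_add by blast
      then show "mult_integrand m \<omega> \<theta> f (g1 + g2) x = mult_integrand m \<omega> \<theta> f g1 x + mult_integrand m \<omega> \<theta> f g2 x"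
        by (simp add: mult_integrand_def distrib_left)
    qed
    also have "\<dots> = \<Phi> g1 + \<Phi> g2" unfolding \<Phi>_def
      using int that by (intro Bochner_Integration.integral_add) auto
    finally show ?thesis .
  qed
  have Psm: "\<Phi> (sm c g) = cnj c * \<Phi> g" if "g \<in> D" for c g
  proof -
    have "\<Phi> (sm c g) = integral\<^sup>L \<mu> (\<lambda>x. cnj c * mult_integrand m \<omega> \<theta> f g x)"
      unfolding \<Phi>_def
    proof (rule Bochner_Integration.integral_cong[OF HOL.refl])
      fix x assume "x \<in> space \<mu>"
      then have "\<theta> x (sm c g) = cnj c * \<theta> x g" using \<theta>_in that cd_sm by blast
      then show "mult_integrand m \<omega> \<theta> f (sm c g) x = cnj c * mult_integrand m \<omega> \<theta> f g x"
        by (simp add: mult_integrand_def)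
    qed
    also have "\<dots> = cnj c * \<Phi> g" unfolding \<Phi>_def by simp
    finally show ?thesis .
  qed
  have ex1: "\<exists>!h. \<forall>g\<in>D. ip h g = \<Phi> g"
    using R(2-5) Padd Psm C unfolding \<Phi>_def[symmetric] by (intro riesz) auto
  show ?thesis unfolding multiplier_def using theI'[OF ex1] unfolding \<Phi>_def .
qed

theorem theorem3p3:
  fixes sm :: "complex \<Rightarrow> 'h::ab_group_add \<Rightarrow> 'h"
    and ip :: "'h \<Rightarrow> 'h \<Rightarrow> complex"
    and D :: "'h set"
    and P :: "('h \<Rightarrow> real) set"
    and \<mu> :: "'x measure"
    and \<omega> \<theta> :: "'x \<Rightarrow> 'h \<Rightarrow> complex"
    and m :: "'x \<Rightarrow> complex"
  assumes rhs: "rigged_hilbert sm ip D P"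
    and refl: "reflexive_lcs sm D P"
    and sigma: "sigma_finite_measure \<mu>"
    and \<omega>_in: "\<forall>x\<in>space \<mu>. \<omega> x \<in> conj_dual sm D P"
    and \<theta>_in: "\<forall>x\<in>space \<mu>. \<theta> x \<in> conj_dual sm D P"
    and \<omega>_meas: "\<forall>f\<in>D. (\<lambda>x. cnj (\<omega> x f)) \<in> borel_measurable \<mu>"
    and \<theta>_meas: "\<forall>f\<in>D. (\<lambda>x. cnj (\<theta> x f)) \<in> borel_measurable \<mu>"
    and m_meas: "m \<in> borel_measurable \<mu>"
    and dom: "mult_domain ip D \<mu> m \<omega> \<theta> = D"
  shows
    "(\<forall>J \<in> cont_ops sm D P.
        (\<forall>f\<in>D. multiplier ip D \<mu> m \<omega> \<theta> (J f) = f) \<longrightarrow>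
        (let \<rho> = (\<lambda>x. adj_op D J (dual_sm (cnj (m x)) (\<omega> x)))
         in \<forall>f\<in>D. \<forall>g\<in>D.
              integrable \<mu> (\<lambda>x. cnj (\<rho> x f) * \<theta> x g) \<and>
              ip f g = (LINT x|\<mu>. cnj (\<rho> x f) * \<theta> x g)))
   \<and>
    (\<forall>K \<in> cont_ops dual_sm (conj_dual sm D P) (strong_seminorms D P).
        (\<forall>f\<in>D. K (emb ip D (multiplier ip D \<mu> m \<omega> \<theta> f)) = emb ip D f) \<longrightarrow>
        (let \<tau> = (\<lambda>x. K (dual_sm (m x) (\<theta> x)))
         in \<forall>f\<in>D. \<forall>g\<in>D.
              integrable \<mu> (\<lambda>x. cnj (\<omega> x f) * \<tau> x g) \<and>
              ip f g = (LINT x|\<mu>. cnj (\<omega> x f) * \<tau> x g)))"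
proof (intro conjI ballI impI)
  note R = rh_parts[OF rhs]
  interpret chs sm ip by unfold_locales (rule R(1))
  have MR: "\<And>f g. f \<in> D \<Longrightarrow> g \<in> D \<Longrightarrow> ip (multiplier ip D \<mu> m \<omega> \<theta> f) g = integral\<^sup>L \<mu> (mult_integrand m \<omega> \<theta> f g)"
    using mult_rep[OF rhs \<theta>_in dom] by blast
  have INT: "\<And>f g. f \<in> D \<Longrightarrow> g \<in> D \<Longrightarrow> integrable \<mu> (mult_integrand m \<omega> \<theta> f g)"
    using dom unfolding mult_domain_def by blast
  {
    fix J assume J: "J \<in> cont_ops sm D P" and MJ: "\<forall>f\<in>D. multiplier ip D \<mu> m \<omega> \<theta> (J f) = f"
    show "let \<rho> = (\<lambda>x. adj_op D J (dual_sm (cnj (m x)) (\<omega> x)))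
         in \<forall>f\<in>D. \<forall>g\<in>D.
              integrable \<mu> (\<lambda>x. cnj (\<rho> x f) * \<theta> x g) \<and>
              ip f g = (LINT x|\<mu>. cnj (\<rho> x f) * \<theta> x g)"
      unfolding Let_def
    proof (intro ballI conjI)
      fix f g assume f: "f \<in> D" and g: "g \<in> D"
      have JfD: "J f \<in> D" using J f unfolding cont_ops_def by blast
      have eq: "(\<lambda>x. cnj (adj_op D J (dual_sm (cnj (m x)) (\<omega> x)) f) * \<theta> x g) = mult_integrand m \<omega> \<theta> (J f) g"
        by (rule ext) (simp add: adj_op_def dual_sm_def mult_integrand_def f)
      show "integrable \<mu> (\<lambda>x. cnj (adj_op D J (dual_sm (cnj (m x)) (\<omega> x)) f) * \<theta> x g)"
        unfolding eq using INT JfD g by blast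
      have "ip f g = ip (multiplier ip D \<mu> m \<omega> \<theta> (J f)) g" using MJ f by simp
      also have "\<dots> = integral\<^sup>L \<mu> (mult_integrand m \<omega> \<theta> (J f) g)" using MR JfD g by blast
      finally show "ip f g = (LINT x|\<mu>. cnj (adj_op D J (dual_sm (cnj (m x)) (\<omega> x)) f) * \<theta> x g)"
        unfolding eq .
    qed
  }
  {
    fix K assume K: "K \<in> cont_ops dual_sm (conj_dual sm D P) (strong_seminorms D P)"
      and KM: "\<forall>f\<in>D. K (emb ip D (multiplier ip D \<mu> m \<omega> \<theta> f)) = emb ip D f"
    define Dx where "Dx = conj_dual sm D P"
    define Qx where "Qx = strong_seminorms D P"
    have Kc: "continuous_map (seminorm_topology Dx Qx) (seminorm_topology Dx Qx) K"
      and Kadd: "\<And>F G. F \<in> Dx \<Longrightarrow> G \<in> Dx \<Longrightarrow> K (F + G) = K F + K G"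
      and Ksm: "\<And>c F. F \<in> Dx \<Longrightarrow> K (dual_sm c F) = dual_sm c (K F)"
      using K unfolding cont_ops_def Dx_def Qx_def by blast+
    show "let \<tau> = (\<lambda>x. K (dual_sm (m x) (\<theta> x)))
         in \<forall>f\<in>D. \<forall>g\<in>D.
              integrable \<mu> (\<lambda>x. cnj (\<omega> x f) * \<tau> x g) \<and>
              ip f g = (LINT x|\<mu>. cnj (\<omega> x f) * \<tau> x g)"
      unfolding Let_def
    proof (intro ballI conjI)
      fix f g assume f: "f \<in> D" and g: "g \<in> D"
      define \<Lambda> where "\<Lambda> F = (if F \<in> Dx then cnj (K F g) else 0)" for F
      have c1: "continuous_map (seminorm_topology Dx Qx) euclidean (\<lambda>F. cnj (K F g))"
        using cmap_cnj[OF continuous_map_compose[OF Kc eval_cont[OF g, of sm P, folded Dx_def Qx_def]]]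
        by (simp add: o_def)
      have Lc: "continuous_map (seminorm_topology Dx Qx) euclidean \<Lambda>"
        by (rule continuous_map_eq[OF c1]) (simp add: semi_topspace \<Lambda>_def)
      have LD: "\<Lambda> \<in> conj_dual dual_sm Dx Qx"
        unfolding conj_dual_def
      proof (intro CollectI conjI ballI allI impI)
        show "continuous_map (seminorm_topology Dx Qx) euclidean \<Lambda>" by (fact Lc)
        fix F G assume F: "F \<in> Dx" and G: "G \<in> Dx"
        have "F + G \<in> Dx" using F G dual_add_in unfolding Dx_def by blast
        then show "\<Lambda> (F + G) = \<Lambda> F + \<Lambda> G" using F G by (simp add: \<Lambda>_def Kadd)
      next
        fix c F assume F: "F \<in> Dx"
        have "dual_sm c F \<in> Dx" using F dual_sm_in unfolding Dx_def by blast
        moreover have "K (dual_sm c F) g = c * K F g" using Ksm[OF F] by (simp add: dual_sm_def)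
        ultimately show "\<Lambda> (dual_sm c F) = cnj c * \<Lambda> F" using F by (simp add: \<Lambda>_def)
      next
        fix F assume "F \<notin> Dx" then show "\<Lambda> F = 0" by (simp add: \<Lambda>_def)
      qed
      have "canonical_bidual sm D P ` D = conj_dual dual_sm Dx Qx"
        using refl unfolding reflexive_lcs_def Let_def Dx_def Qx_def by blast
      then obtain g' where g': "g' \<in> D" "canonical_bidual sm D P g' = \<Lambda>" using LD by force
      have Kg: "K F g = F g'" if F: "F \<in> Dx" for F
      proof -
        have "canonical_bidual sm D P g' F = \<Lambda> F" using g' by simp
        then have "cnj (F g') = cnj (K F g)" using F unfolding canonical_bidual_def \<Lambda>_def Dx_def by simp
        then show ?thesis by simp
      qed
      have embD: "emb ip D (multiplier ip D \<mu> m \<omega> \<theta> f) \<in> Dx" unfolding Dx_def by (rule emb_in[OF rhs])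
      have "ip f g = emb ip D f g" using g by (simp add: emb_def)
      also have "\<dots> = K (emb ip D (multiplier ip D \<mu> m \<omega> \<theta> f)) g" using KM f by simp
      also have "\<dots> = emb ip D (multiplier ip D \<mu> m \<omega> \<theta> f) g'" using Kg embD by simp
      also have "\<dots> = ip (multiplier ip D \<mu> m \<omega> \<theta> f) g'" using g' by (simp add: emb_def)
      also have "\<dots> = integral\<^sup>L \<mu> (mult_integrand m \<omega> \<theta> f g')" using MR f g' by blast
      finally have ipfg: "ip f g = integral\<^sup>L \<mu> (mult_integrand m \<omega> \<theta> f g')" .
      have pt: "cnj (\<omega> x f) * K (dual_sm (m x) (\<theta> x)) g = mult_integrand m \<omega> \<theta> f g' x"
        if x: "x \<in> space \<mu>" for x
      proof -
        have "dual_sm (m x) (\<theta> x) \<in> Dx" using \<theta>_in x dual_sm_in unfolding Dx_def by blast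
        then have "K (dual_sm (m x) (\<theta> x)) g = dual_sm (m x) (\<theta> x) g'" by (rule Kg)
        then show ?thesis by (simp add: dual_sm_def mult_integrand_def)
      qed
      have ic: "integrable \<mu> (\<lambda>x. cnj (\<omega> x f) * K (dual_sm (m x) (\<theta> x)) g) = integrable \<mu> (mult_integrand m \<omega> \<theta> f g')"
        by (rule Bochner_Integration.integrable_cong[OF HOL.refl]) (rule pt)
      have lc: "(LINT x|\<mu>. cnj (\<omega> x f) * K (dual_sm (m x) (\<theta> x)) g) = integral\<^sup>L \<mu> (mult_integrand m \<omega> \<theta> f g')"
        by (rule Bochner_Integration.integral_cong[OF HOL.refl]) (rule pt)
      show "integrable \<mu> (\<lambda>x. cnj (\<omega> x f) * K (dual_sm (m x) (\<theta> x)) g)"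
        using ic INT[OF f g'(1)] by blast
      show "ip f g = (LINT x|\<mu>. cnj (\<omega> x f) * K (dual_sm (m x) (\<theta> x)) g)"
        using lc ipfg by simp
    qed
  }
qed

end
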